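(* Let $n\ge 3$, let $P(G(n))$ be the power graph of the gyrogroup $G(n)$ (defined in the context), and write $N=2^{n-1}$. Then (1) $dds(P(G(n)))=\big((1,2^n-1),\,(1,N-1,N)^{N-1},\,(1,1,2^n-2)^{N}\big)$, where $(1,2^n-1)$ is the distance degree sequence of $e$, $(1,N-1,N)$ that of each $u\in P(n)\setminus\{e\}$, and $(1,1,2^n-2)$ that of each $u\in H(n)$; (2) $dds_D(P(G(n)))=\big((1,N,\underbrace{0,\dots,0}_{N-3},N-1),\,(1,\underbrace{0,\dots,0}_{N-2},N-1,N)^{N-1},\,(1,1,N-1,\underbrace{0,\dots,0}_{N-3},N-1)^{N}\big)$, where the first sequence is the detour distance degree sequence of $e$, the second that of each $u\in P(n)\setminus\{e\}$, and the third that of each $u\in H(n)$.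
   Context: Let $n\ge 3$ be an integer and $m=2^{n-1}$. Let $P(n)=\{0,1,\dots,m-1\}$, $H(n)=\{m,m+1,\dots,2^n-1\}$ and $G(n)=P(n)\cup H(n)$. For $i,j\in G(n)$ let $t,s,k\in P(n)$ be the residues modulo $m$ (taken in $\{0,\dots,m-1\}$) of $i+j$, $i+(\frac m2-1)j$ and $(\frac m2+1)i+(\frac m2-1)j$, respectively, and define $i\oplus j=t$ if $i,j\in P(n)$; $i\oplus j=t+m$ if $i\in P(n),j\in H(n)$; $i\oplus j=s+m$ if $i\in H(n),j\in P(n)$; $i\oplus j=k$ if $i,j\in H(n)$. Then $(G(n),\oplus)$ is a gyrogroup with identity $e=0$. Powers are defined by $a^1=a$, $a^{k+1}=a^k\oplus a$. The power graph $P(G(n))$ is the simple undirected graph with vertex set $G(n)$ in which distinct vertices $u,v$ are adjacent if and only if $u^k=v$ or $v^k=u$ for some positive integer $k$. For a vertex $u$ of a connected graph, let $deg_k(u)$ (resp. $Deg_k(u)$) be the number of vertices at distance (resp. detour distance, i.e. length of a longest path) exactly $k$ from $u$. The distance degree sequence of $u$ is $dds(u)=(deg_0(u),deg_1(u),\dots,deg_{ec(u)}(u))$, where $ec(u)$ is the eccentricity, and the detour distance degree sequence is $dds_D(u)=(Deg_0(u),\dots,Deg_{ec_D(u)}(u))$, where $ec_D(u)$ is the detour eccentricity. $dds(G)$ (resp. $dds_D(G)$) is the collection of these sequences over all vertices; an exponent $s^{r}$ indicates the sequence $s$ occurs for $r$ vertices. *)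

theory Defs
  imports Main
begin

definition mm :: "nat \<Rightarrow> nat" where "mm n = 2 ^ (n - 1)"

definition Pn :: "nat \<Rightarrow> nat set" where "Pn n = {0..<mm n}"
definition Hn :: "nat \<Rightarrow> nat set" where "Hn n = {mm n..<2 ^ n}"
definition Gn :: "nat \<Rightarrow> nat set" where "Gn n = Pn n \<union> Hn n"

definition gop :: "nat \<Rightarrow> nat \<Rightarrow> nat \<Rightarrow> nat" where
  "gop n i j =
    (let m = mm n;
         t = (i + j) mod m;
         s = (i + (m div 2 - 1) * j) mod m;
         k = ((m div 2 + 1) * i + (m div 2 - 1) * j) mod m
     in if i \<in> Pn n \<and> j \<in> Pn n then t
        else if i \<in> Pn n \<and> j \<in> Hn n then t + m
        else if i \<in> Hn n \<and> j \<in> Pn n then s + m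
        else k)"

fun gpow :: "nat \<Rightarrow> nat \<Rightarrow> nat \<Rightarrow> nat" where
  "gpow n a 0 = 0"
| "gpow n a (Suc 0) = a"
| "gpow n a (Suc (Suc k)) = gop n (gpow n a (Suc k)) a"

definition padj :: "nat \<Rightarrow> nat \<Rightarrow> nat \<Rightarrow> bool" where
  "padj n u v \<longleftrightarrow> u \<in> Gn n \<and> v \<in> Gn n \<and> u \<noteq> v \<and>
     ((\<exists>k>0. gpow n u k = v) \<or> (\<exists>k>0. gpow n v k = u))"

definition is_path :: "nat \<Rightarrow> nat list \<Rightarrow> bool" where
  "is_path n xs \<longleftrightarrow> xs \<noteq> [] \<and> distinct xs \<and> set xs \<subseteq> Gn n \<and>
     (\<forall>i. Suc i < length xs \<longrightarrow> padj n (xs ! i) (xs ! Suc i))"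

definition path_lens :: "nat \<Rightarrow> nat \<Rightarrow> nat \<Rightarrow> nat set" where
  "path_lens n u v = {length xs - 1 | xs. is_path n xs \<and> hd xs = u \<and> last xs = v}"

definition gdist :: "nat \<Rightarrow> nat \<Rightarrow> nat \<Rightarrow> nat" where
  "gdist n u v = Min (path_lens n u v)"

definition ddist :: "nat \<Rightarrow> nat \<Rightarrow> nat \<Rightarrow> nat" where
  "ddist n u v = Max (path_lens n u v)"

definition ecc :: "nat \<Rightarrow> nat \<Rightarrow> nat" where
  "ecc n u = Max (gdist n u ` Gn n)"
definition ecc_D :: "nat \<Rightarrow> nat \<Rightarrow> nat" where
  "ecc_D n u = Max (ddist n u ` Gn n)"

definition deg_k :: "nat \<Rightarrow> nat \<Rightarrow> nat \<Rightarrow> nat" where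
  "deg_k n u k = card {v \<in> Gn n. gdist n u v = k}"
definition Deg_k :: "nat \<Rightarrow> nat \<Rightarrow> nat \<Rightarrow> nat" where
  "Deg_k n u k = card {v \<in> Gn n. ddist n u v = k}"

definition dds :: "nat \<Rightarrow> nat \<Rightarrow> nat list" where
  "dds n u = map (deg_k n u) [0..<Suc (ecc n u)]"
definition dds_D :: "nat \<Rightarrow> nat \<Rightarrow> nat list" where
  "dds_D n u = map (Deg_k n u) [0..<Suc (ecc_D n u)]"

end

theory Submission
  imports Defs "HOL-Computational_Algebra.Primes"
begin


lemma mm_facts: assumes "n \<ge> 3" shows "mm n \<ge> 4" "2 ^ n = 2 * mm n" "even (mm n)"
proof -
  have "n = Suc (n - 1)" using assms by simp
  then have e: "2 ^ n = 2 * mm n" unfolding mm_def by (metis power_Suc)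
  have "(2::nat) ^ 2 \<le> 2 ^ (n - 1)" using assms by (intro power_increasing) auto
  then show "mm n \<ge> 4" unfolding mm_def by simp
  show "2 ^ n = 2 * mm n" by (rule e)
  have "n - 1 = Suc (n - 2)" using assms by simp
  then show "even (mm n)" unfolding mm_def by (metis dvd_triv_left power_Suc)
qed

lemma Gn_eq: assumes "n \<ge> 3" shows "Gn n = {..<2 * mm n}"
  using mm_facts[OF assms] unfolding Gn_def Pn_def Hn_def by auto

lemma gop_PP: assumes "i < mm n" "j < mm n" shows "gop n i j = (i + j) mod mm n"
  using assms unfolding gop_def Pn_def by (simp add: Let_def)

lemma gop_0H: assumes "n \<ge> 3" "mm n \<le> h" "h < 2 * mm n" shows "gop n 0 h = h"
proof -
  have "h mod mm n = h - mm n" using assms by (simp add: le_mod_geq)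
  then show ?thesis using assms mm_facts[OF assms(1)] unfolding gop_def Pn_def Hn_def
    by (simp add: Let_def)
qed

lemma gop_HH: assumes "n \<ge> 3" "mm n \<le> h" "h < 2 * mm n" shows "gop n h h = 0"
proof -
  have f: "mm n \<ge> 4" "2 ^ n = 2 * mm n" "even (mm n)" using mm_facts[OF assms(1)] by auto
  have "(mm n div 2 + 1) * h + (mm n div 2 - 1) * h = ((mm n div 2 + 1) + (mm n div 2 - 1)) * h"
    by (simp add: algebra_simps)
  also have "(mm n div 2 + 1) + (mm n div 2 - 1) = mm n" using f by auto
  finally have "((mm n div 2 + 1) * h + (mm n div 2 - 1) * h) mod mm n = 0" by simp
  then show ?thesis using assms f unfolding gop_def Pn_def Hn_def
    by (simp add: Let_def)
qed

lemma gpow_P: assumes "n \<ge> 3" "p < mm n" "k \<ge> 1" shows "gpow n p k = (k * p) mod mm n"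
  using assms(3)
proof (induction k rule: nat_induct_at_least)
  case base then show ?case using assms by simp
next
  case (Suc k)
  then obtain j where k: "k = Suc j" by (cases k) auto
  have pos: "mm n > 0" using mm_facts[OF assms(1)] by simp
  have "gpow n p (Suc k) = gop n (gpow n p k) p" using k by simp
  also have "\<dots> = ((k * p) mod mm n + p) mod mm n"
    using Suc pos assms by (simp add: gop_PP)
  also have "\<dots> = (Suc k * p) mod mm n" by (metis add.commute mod_add_left_eq mult_Suc)
  finally show ?case .
qed

lemma gpow_H: assumes "n \<ge> 3" "mm n \<le> h" "h < 2 * mm n" "k \<ge> 1"
  shows "gpow n h k = (if odd k then h else 0)"
  using assms(4)
proof (induction k rule: nat_induct_at_least)
  case base then show ?case by simp
next
  case (Suc k)
  then obtain j where k: "k = Suc j" by (cases k) auto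
  have "gpow n h (Suc k) = gop n (gpow n h k) h" using k by simp
  then show ?case using Suc gop_HH[OF assms(1-3)] gop_0H[OF assms(1-3)] by auto
qed

lemma cyclic2: fixes m u v :: nat assumes "m = 2 ^ r" "u < m" "v < m"
  shows "(\<exists>k>0. (k * u) mod m = v) \<or> (\<exists>k>0. (k * v) mod m = u)"
proof -
  have key: "\<exists>k>0. (k * a) mod m = b" if "a < m" "b < m" "a \<noteq> 0" "b \<noteq> 0"
     "gcd a m dvd gcd b m" for a b
  proof -
    obtain x y where xy: "a * x = m * y + gcd a m" using bezout_nat[OF \<open>a \<noteq> 0\<close>] by blast
    have "gcd a m dvd b" using that(5) by (meson dvd_trans gcd_dvd1)
    then obtain c where c: "b = gcd a m * c" by blast
    have "(c * x) * a = c * (a * x)" by (simp add: ac_simps)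
    also have "\<dots> = c * (m * y + gcd a m)" by (simp add: xy)
    also have "\<dots> = c * (m * y) + b" using c by (simp add: algebra_simps)
    finally have "(c * x) * a = c * (m * y) + b" .
    then have "((c * x) * a) mod m = b" using that
      by (metis add.commute mod_less mod_mult_self2 mult.left_commute)
    moreover have "c * x > 0"
    proof (rule ccontr)
      assume "\<not> c * x > 0"
      then have "c * x = 0" by simp
      then have "(c * x) * a = 0" by simp
      with \<open>(c * x) * a = c * (m * y) + b\<close> that show False by simp
    qed
    ultimately show ?thesis by blast
  qed
  show ?thesis
  proof (cases "u = 0 \<or> v = 0")
    case True
    have "m > 0" using assms by simp
    then show ?thesis using True by (metis mod_mult_self1_is_0 mult.commute)
  next
    case False
    have "gcd u m dvd 2 ^ r" "gcd v m dvd 2 ^ r" using assms by auto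
    then obtain a b where "gcd u m = 2 ^ a" "gcd v m = 2 ^ b"
      using divides_primepow_nat[OF two_is_prime_nat] by meson
    then have "gcd u m dvd gcd v m \<or> gcd v m dvd gcd u m"
      by (metis le_imp_power_dvd nat_le_linear)
    then show ?thesis using key False assms by blast
  qed
qed

lemma pow_dir: assumes "n \<ge> 3" "u < 2 * mm n" "v < 2 * mm n" "u \<noteq> v" "k > 0" "gpow n u k = v"
  shows "(u < mm n \<and> v < mm n) \<or> v = 0"
proof (cases "u < mm n")
  case True
  have "mm n > 0" using mm_facts[OF assms(1)] by simp
  have "v = (k * u) mod mm n" using True assms gpow_P[OF assms(1) True, of k] by simp
  then have "v < mm n" using \<open>mm n > 0\<close> by simp
  then show ?thesis using True by simp
next
  case False
  then show ?thesis using assms gpow_H[OF assms(1), of u k] by (auto split: if_splits)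
qed

lemma padj_iff: assumes "n \<ge> 3"
  shows "padj n u v \<longleftrightarrow> u < 2 * mm n \<and> v < 2 * mm n \<and> u \<noteq> v \<and>
     ((u < mm n \<and> v < mm n) \<or> u = 0 \<or> v = 0)"
proof
  assume a: "padj n u v"
  then have b: "u < 2 * mm n" "v < 2 * mm n" "u \<noteq> v"
    unfolding padj_def Gn_eq[OF assms] by auto
  from a have "(\<exists>k>0. gpow n u k = v) \<or> (\<exists>k>0. gpow n v k = u)" unfolding padj_def by blast
  then show "u < 2 * mm n \<and> v < 2 * mm n \<and> u \<noteq> v \<and>
     ((u < mm n \<and> v < mm n) \<or> u = 0 \<or> v = 0)"
    using pow_dir[OF assms b] pow_dir[OF assms b(2,1)] b by metis
next
  assume a: "u < 2 * mm n \<and> v < 2 * mm n \<and> u \<noteq> v \<and>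
     ((u < mm n \<and> v < mm n) \<or> u = 0 \<or> v = 0)"
  have f: "mm n \<ge> 4" using mm_facts[OF assms] by simp
  have m2: "mm n = 2 ^ (n - 1)" by (simp add: mm_def)
  have "(\<exists>k>0. gpow n u k = v) \<or> (\<exists>k>0. gpow n v k = u)"
  proof (cases "u < mm n \<and> v < mm n")
    case True
    then have "(\<exists>k>0. (k * u) mod mm n = v) \<or> (\<exists>k>0. (k * v) mod mm n = u)"
      using cyclic2[OF m2] by blast
    then show ?thesis using gpow_P[OF assms] True
      by (metis One_nat_def Suc_leI)
  next
    case False
    then have "(u = 0 \<and> mm n \<le> v) \<or> (v = 0 \<and> mm n \<le> u)" using a by auto
    then show ?thesis
    proof
      assume "u = 0 \<and> mm n \<le> v"
      then have "gpow n v 2 = u" using gpow_H[OF assms, of v 2] a by simp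
      then show ?thesis by (intro disjI2 exI[of _ 2]) simp
    next
      assume "v = 0 \<and> mm n \<le> u"
      then have "gpow n u 2 = v" using gpow_H[OF assms, of u 2] a by simp
      then show ?thesis by (intro disjI1 exI[of _ 2]) simp
    qed
  qed
  then show "padj n u v" using a unfolding padj_def Gn_eq[OF assms] by auto
qed



definition E :: "nat \<Rightarrow> nat \<Rightarrow> nat \<Rightarrow> bool" where
  "E m u v \<longleftrightarrow> u < 2 * m \<and> v < 2 * m \<and> u \<noteq> v \<and> ((u < m \<and> v < m) \<or> u = 0 \<or> v = 0)"

definition pth :: "nat \<Rightarrow> nat list \<Rightarrow> bool" where
  "pth m xs \<longleftrightarrow> xs \<noteq> [] \<and> distinct xs \<and> set xs \<subseteq> {..<2 * m} \<and> successively (E m) xs"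

definition pl :: "nat \<Rightarrow> nat \<Rightarrow> nat \<Rightarrow> nat set" where
  "pl m u v = {length xs - 1 | xs. pth m xs \<and> hd xs = u \<and> last xs = v}"

lemma E_sym: "E m u v = E m v u" unfolding E_def by auto

lemma pth_rev: "pth m (rev xs) = pth m xs"
  unfolding pth_def using E_sym by (simp add: successively_rev)

lemma pl_sym: "pl m u v = pl m v u"
proof -
  have "pl m u v \<subseteq> pl m v u" for u v
  proof
    fix l assume "l \<in> pl m u v"
    then obtain xs where "l = length xs - 1" "pth m xs" "hd xs = u" "last xs = v"
      unfolding pl_def by blast
    then have "l = length (rev xs) - 1" "pth m (rev xs)" "hd (rev xs) = v" "last (rev xs) = u"
      using pth_rev by (auto simp: hd_rev last_rev pth_def)
    then show "l \<in> pl m v u" unfolding pl_def by blast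
  qed
  then show ?thesis by blast
qed

lemma pth_len: "pth m xs \<Longrightarrow> length xs \<le> 2 * m"
  unfolding pth_def by (metis card_lessThan card_mono distinct_card finite_lessThan)

lemma pl_finite: "finite (pl m u v)"
proof -
  have "pl m u v \<subseteq> {..2 * m}" unfolding pl_def using pth_len by fastforce
  then show ?thesis using finite_subset by blast
qed

lemma pth_nth: "pth m xs \<Longrightarrow> Suc i < length xs \<Longrightarrow> E m (xs ! i) (xs ! Suc i)"
  unfolding pth_def by (simp add: successively_conv_nth)

lemma pl_refl: assumes "u < 2 * m" shows "pl m u u = {0}"
proof -
  have "pth m [u]" using assms unfolding pth_def by simp
  then have "0 \<in> pl m u u" unfolding pl_def by force
  moreover have "l = 0" if lin: "l \<in> pl m u u" for l
  proof -
    obtain xs where xs: "l = length xs - 1" "pth m xs" "hd xs = u" "last xs = u"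
      using lin unfolding pl_def by blast
    have ne: "xs \<noteq> []" "distinct xs" using xs unfolding pth_def by auto
    have "xs ! 0 = xs ! (length xs - 1)" using xs ne by (simp add: hd_conv_nth last_conv_nth)
    then have "0 = length xs - 1" using ne nth_eq_iff_index_eq[OF ne(2)] by simp
    then show ?thesis using xs by simp
  qed
  ultimately show ?thesis by blast
qed

lemma pl_ge1: assumes "l \<in> pl m u v" "u \<noteq> v" shows "l \<ge> 1" "l = 1 \<Longrightarrow> E m u v"
proof -
  obtain xs where xs: "l = length xs - 1" "pth m xs" "hd xs = u" "last xs = v"
    using assms unfolding pl_def by blast
  have ne: "xs \<noteq> []" using xs unfolding pth_def by auto
  show "l \<ge> 1"
  proof (rule ccontr)
    assume a: "\<not> l \<ge> 1"
    have "length xs > 0" using ne by simp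
    then have "length xs = 1" using xs(1) a by linarith
    then obtain a where "xs = [a]" by (metis One_nat_def length_0_conv length_Suc_conv)
    then have "hd xs = last xs" by simp
    then show False using xs assms by simp
  qed
  assume "l = 1"
  then have "length xs = 2" using xs ne by (cases xs) auto
  then obtain a b where "xs = [a, b]"
    by (metis One_nat_def Suc_1 length_0_conv length_Suc_conv)
  then show "E m u v" using pth_nth[OF xs(2), of 0] xs by simp
qed

lemma interior: assumes "pth m xs" "0 < i" "Suc i < length xs" shows "xs ! i < m"
proof (rule ccontr)
  assume a: "\<not> xs ! i < m"
  have d: "distinct xs" using assms unfolding pth_def by simp
  obtain j where j: "i = Suc j" using assms by (cases i) auto
  have "E m (xs ! j) (xs ! i)" using pth_nth[OF assms(1), of j] j assms by simp
  then have "xs ! j = 0" using a unfolding E_def by auto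
  moreover have "E m (xs ! i) (xs ! Suc i)" using pth_nth[OF assms(1), of i] assms by simp
  then have "xs ! Suc i = 0" using a unfolding E_def by auto
  ultimately have "xs ! j = xs ! Suc i" by simp
  then have "j = Suc i" using nth_eq_iff_index_eq[OF d] assms j by simp
  then show False using j by simp
qed

lemma firstH: assumes "pth m xs" "1 < length xs" "hd xs \<ge> m" shows "xs ! 1 = 0"
proof -
  have "E m (xs ! 0) (xs ! 1)" using pth_nth[OF assms(1), of 0] assms by simp
  moreover have "xs \<noteq> []" using assms(2) by auto
  then have "xs ! 0 = hd xs" by (simp add: hd_conv_nth)
  ultimately show ?thesis using assms(3) unfolding E_def by auto
qed

lemma pth_E: "E m u v \<Longrightarrow> 1 \<in> pl m u v"
proof -
  assume "E m u v"
  then have "pth m [u, v]" unfolding pth_def E_def by auto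
  then show ?thesis unfolding pl_def by force
qed

lemma succ_P: assumes "distinct xs" "set xs \<subseteq> {..<m}" shows "successively (E m) xs"
  unfolding successively_conv_nth
proof (intro allI impI)
  fix i assume i: "Suc i < length xs"
  have "xs ! i \<noteq> xs ! Suc i" using nth_eq_iff_index_eq[OF assms(1)] i by simp
  moreover have "xs ! i < m" "xs ! Suc i < m" using assms i nth_mem
    by (metis Suc_lessD lessThan_iff subsetD)+
  ultimately show "E m (xs ! i) (xs ! Suc i)" unfolding E_def by auto
qed

definition ham :: "nat \<Rightarrow> nat \<Rightarrow> nat \<Rightarrow> nat list" where
  "ham m u v = u # filter (\<lambda>x. x \<noteq> u \<and> x \<noteq> v) [0..<m] @ [v]"

lemma ham: assumes "u < m" "v < m" "u \<noteq> v"
  shows "pth m (ham m u v)" "length (ham m u v) = m" "set (ham m u v) = {..<m}"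
    "hd (ham m u v) = u" "last (ham m u v) = v"
proof -
  show s: "set (ham m u v) = {..<m}" using assms unfolding ham_def by auto
  have d: "distinct (ham m u v)" using assms unfolding ham_def by auto
  show "pth m (ham m u v)" unfolding pth_def using s d succ_P[OF d] by (auto simp: ham_def)
  show "length (ham m u v) = m" using d s distinct_card by fastforce
  show "hd (ham m u v) = u" "last (ham m u v) = v" unfolding ham_def by auto
qed

lemma in_P_nth: assumes "pth m xs" "\<And>i. i < length xs \<Longrightarrow> i \<noteq> 0 \<Longrightarrow> Suc i \<noteq> length xs \<Longrightarrow> xs ! i < m"
  "hd xs < m" "last xs < m" shows "set xs \<subseteq> {..<m}"
proof
  fix x assume "x \<in> set xs"
  then obtain i where i: "i < length xs" "xs ! i = x" by (auto simp: in_set_conv_nth)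
  have ne: "xs \<noteq> []" using i by auto
  show "x \<in> {..<m}"
  proof (cases "i = 0 \<or> Suc i = length xs")
    case True
    then show ?thesis
    proof
      assume "i = 0" then show ?thesis using i ne assms(3) by (auto simp: hd_conv_nth)
    next
      assume "Suc i = length xs"
      then have "i = length xs - 1" by simp
      then show ?thesis using i ne assms(4) by (auto simp: last_conv_nth)
    qed
  next
    case False
    then show ?thesis using assms(2) i by auto
  qed
qed

lemma ub_PP: assumes "pth m xs" "hd xs < m" "last xs < m" shows "length xs \<le> m"
proof -
  have "set xs \<subseteq> {..<m}" using in_P_nth[OF assms(1) _ assms(2,3)] interior[OF assms(1)] by auto
  moreover have "distinct xs" using assms unfolding pth_def by simp
  ultimately show ?thesis by (metis card_lessThan card_mono distinct_card finite_lessThan)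
qed

lemma ub_HP: assumes "pth m xs" "hd xs \<ge> m" "last xs < m" shows "length xs \<le> Suc m"
proof -
  have ne: "xs \<noteq> []" using assms unfolding pth_def by simp
  have l2: "length xs \<ge> 2"
  proof (rule ccontr)
    assume "\<not> length xs \<ge> 2"
    moreover have "length xs > 0" using ne by simp
    ultimately have "length xs = 1" by linarith
    then obtain a where "xs = [a]" by (metis One_nat_def length_0_conv length_Suc_conv)
    then show False using assms by simp
  qed
  have p: "pth m (tl xs)" using assms(1) l2 unfolding pth_def
    by (cases xs) (auto simp: successively_Cons)
  have "set (tl xs) \<subseteq> {..<m}"
  proof (rule in_P_nth[OF p])
    fix i assume "i < length (tl xs)" "i \<noteq> 0" "Suc i \<noteq> length (tl xs)"
    then show "tl xs ! i < m" using interior[OF assms(1), of "Suc i"] by (simp add: nth_tl)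
  next
    have "tl xs ! 0 = xs ! 1" using l2 by (simp add: nth_tl)
    also have "\<dots> = 0" using firstH[OF assms(1)] l2 assms(2) by simp
    finally show "hd (tl xs) < m" using p assms l2 unfolding pth_def
      by (metis hd_conv_nth less_nat_zero_code neq0_conv)
  next
    show "last (tl xs) < m" using assms l2 by (metis last_tl p pth_def)
  qed
  moreover have "distinct (tl xs)" using p unfolding pth_def by simp
  ultimately have "length (tl xs) \<le> m" by (metis card_lessThan card_mono distinct_card finite_lessThan)
  then show ?thesis by simp
qed

lemma ub_H0: assumes "pth m xs" "hd xs \<ge> m" "last xs = 0" "m > 0" shows "length xs = 2"
proof -
  have ne: "xs \<noteq> []" and d: "distinct xs" using assms unfolding pth_def by auto
  have l2: "length xs \<ge> 2"
  proof (rule ccontr)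
    assume "\<not> length xs \<ge> 2"
    moreover have "length xs > 0" using ne by simp
    ultimately have "length xs = 1" by linarith
    then obtain a where "xs = [a]" by (metis One_nat_def length_0_conv length_Suc_conv)
    then show False using assms by simp
  qed
  have "xs ! 1 = 0" using firstH[OF assms(1)] l2 assms(2) by simp
  moreover have "xs ! (length xs - 1) = 0" using assms(3) ne by (simp add: last_conv_nth)
  ultimately have "1 = length xs - 1" using nth_eq_iff_index_eq[OF d, of 1 "length xs - 1"] l2 by simp
  then show ?thesis by simp
qed

lemma ub_HH: assumes "pth m xs" "hd xs \<ge> m" "last xs \<ge> m" "hd xs \<noteq> last xs" "m > 0"
  shows "length xs = 3"
proof -
  have ne: "xs \<noteq> []" and d: "distinct xs" using assms unfolding pth_def by auto
  have l2: "length xs \<ge> 2"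
  proof (rule ccontr)
    assume "\<not> length xs \<ge> 2"
    moreover have "length xs > 0" using ne by simp
    ultimately have "length xs = 1" by linarith
    then obtain a where "xs = [a]" by (metis One_nat_def length_0_conv length_Suc_conv)
    then show False using assms by simp
  qed
  have r: "pth m (rev xs)" using assms pth_rev by simp
  have "xs ! 1 = 0" using firstH[OF assms(1)] l2 assms(2) by simp
  moreover have "rev xs ! 1 = 0" using firstH[OF r] l2 assms(3) by (simp add: hd_rev)
  then have "xs ! (length xs - 2) = 0" using l2 by (simp add: rev_nth numeral_2_eq_2)
  ultimately have "1 = length xs - 2" using nth_eq_iff_index_eq[OF d, of 1 "length xs - 2"] l2 by simp
  then show ?thesis by simp
qed

definition gd :: "nat \<Rightarrow> nat \<Rightarrow> nat \<Rightarrow> nat" where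
  "gd m u v = (if u = v then 0 else if E m u v then 1 else 2)"
definition dd :: "nat \<Rightarrow> nat \<Rightarrow> nat \<Rightarrow> nat" where
  "dd m u v = (if u = v then 0 else if u < m \<and> v < m then m - 1 else if u = 0 \<or> v = 0 then 1
     else if u < m \<or> v < m then m else 2)"

lemma minmax: assumes "finite S" "a \<in> S" "b \<in> S" "\<And>x. x \<in> S \<Longrightarrow> a \<le> x \<and> x \<le> b"
  shows "Min S = a \<and> Max S = b"
  using assms by (meson Max_eqI Min_eqI)

lemma in_pl: "pth m xs \<Longrightarrow> hd xs = u \<Longrightarrow> last xs = v \<Longrightarrow> l = length xs - 1 \<Longrightarrow> l \<in> pl m u v"
  unfolding pl_def by blast

lemma pl_H: assumes "m \<ge> 4" "m \<le> u" "u < 2 * m" "v < 2 * m"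
  shows "Min (pl m u v) = gd m u v \<and> Max (pl m u v) = dd m u v"
proof -
  have fin: "finite (pl m u v)" by (rule pl_finite)
  consider "v = u" | "v = 0" | "0 < v \<and> v < m" | "m \<le> v \<and> v \<noteq> u" by linarith
  then show ?thesis
  proof cases
    case 1 then show ?thesis using pl_refl[OF assms(3)] unfolding gd_def dd_def by simp
  next
    case 2
    have E: "E m u v" using 2 assms unfolding E_def by auto
    have "l = 1" if lin: "l \<in> pl m u v" for l
    proof -
      obtain xs where "l = length xs - 1" "pth m xs" "hd xs = u" "last xs = v"
        using lin unfolding pl_def by blast
      then show ?thesis using ub_H0[of m xs] assms 2 by simp
    qed
    then have "Min (pl m u v) = 1 \<and> Max (pl m u v) = 1" using minmax[OF fin pth_E[OF E] pth_E[OF E]] by blast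
    moreover have "gd m u v = 1" "dd m u v = 1" using 2 assms E unfolding gd_def dd_def by auto
    ultimately show ?thesis by simp
  next
    case 3
    have nE: "\<not> E m u v" using 3 assms unfolding E_def by auto
    have p1: "pth m [u, 0, v]" using 3 assms unfolding pth_def E_def by auto
    have w1: "2 \<in> pl m u v" by (rule in_pl[OF p1]) auto
    have h: "pth m (ham m 0 v)" "length (ham m 0 v) = m" "hd (ham m 0 v) = 0" "last (ham m 0 v) = v"
      "set (ham m 0 v) = {..<m}"
      using ham[of 0 m v] 3 by auto
    have hp: "ham m 0 v \<noteq> []" "distinct (ham m 0 v)" "set (ham m 0 v) \<subseteq> {..<2 * m}"
      "successively (E m) (ham m 0 v)" using h(1) unfolding pth_def by auto
    have "u \<notin> set (ham m 0 v)" using h(5) assms by auto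
    moreover have "E m u 0" using assms unfolding E_def by auto
    ultimately have p2: "pth m (u # ham m 0 v)" using hp h(3) assms unfolding pth_def
      by (simp add: successively_Cons)
    have "last (u # ham m 0 v) = v" using hp(1) h(4) by simp
    moreover have "m = length (u # ham m 0 v) - 1" using h(2) by simp
    ultimately have w2: "m \<in> pl m u v" using in_pl[OF p2] by simp
    have "2 \<le> l \<and> l \<le> m" if lin: "l \<in> pl m u v" for l
    proof -
      have "l \<ge> 1" "l \<noteq> 1" using pl_ge1[OF lin] nE assms 3 by auto
      moreover obtain xs where "l = length xs - 1" "pth m xs" "hd xs = u" "last xs = v"
        using lin unfolding pl_def by blast
      then have "l \<le> m" using ub_HP[of m xs] assms 3 by auto
      ultimately show ?thesis by simp
    qed
    then have "Min (pl m u v) = 2 \<and> Max (pl m u v) = m" using minmax[OF fin w1 w2] by blast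
    moreover have "gd m u v = 2" "dd m u v = m" using 3 assms nE unfolding gd_def dd_def by auto
    ultimately show ?thesis by simp
  next
    case 4
    have nE: "\<not> E m u v" using 4 assms unfolding E_def by auto
    have p1: "pth m [u, 0, v]" using 4 assms unfolding pth_def E_def by auto
    have w1: "2 \<in> pl m u v" by (rule in_pl[OF p1]) auto
    have "l = 2" if lin: "l \<in> pl m u v" for l
    proof -
      obtain xs where "l = length xs - 1" "pth m xs" "hd xs = u" "last xs = v"
        using lin unfolding pl_def by blast
      then show ?thesis using ub_HH[of m xs] assms 4 by auto
    qed
    then have "Min (pl m u v) = 2 \<and> Max (pl m u v) = 2" using minmax[OF fin w1 w1] by force
    moreover have "gd m u v = 2" "dd m u v = 2" using 4 assms nE unfolding gd_def dd_def by auto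
    ultimately show ?thesis by simp
  qed
qed

lemma pl_P: assumes "m \<ge> 4" "u < m" "v < m"
  shows "Min (pl m u v) = gd m u v \<and> Max (pl m u v) = dd m u v"
proof (cases "u = v")
  case True then show ?thesis using pl_refl[of u m] assms unfolding gd_def dd_def by simp
next
  case False
  have fin: "finite (pl m u v)" by (rule pl_finite)
  have E: "E m u v" using False assms unfolding E_def by auto
  have h: "pth m (ham m u v)" "length (ham m u v) = m" "hd (ham m u v) = u" "last (ham m u v) = v"
    using ham[of u m v] False assms by auto
  have w2: "m - 1 \<in> pl m u v" using in_pl[OF h(1) h(3) h(4)] h(2) by simp
  have "1 \<le> l \<and> l \<le> m - 1" if lin: "l \<in> pl m u v" for l
  proof -
    have "l \<ge> 1" using pl_ge1[OF lin] False by auto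
    moreover obtain xs where "l = length xs - 1" "pth m xs" "hd xs = u" "last xs = v"
      using lin unfolding pl_def by blast
    then have "l \<le> m - 1" using ub_PP[of m xs] assms by simp
    ultimately show ?thesis by simp
  qed
  then have "Min (pl m u v) = 1 \<and> Max (pl m u v) = m - 1" using minmax[OF fin pth_E[OF E] w2] by blast
  moreover have "gd m u v = 1" "dd m u v = m - 1" using False assms E unfolding gd_def dd_def by auto
  ultimately show ?thesis by simp
qed

lemma pl_all: assumes "m \<ge> 4" "u < 2 * m" "v < 2 * m"
  shows "Min (pl m u v) = gd m u v \<and> Max (pl m u v) = dd m u v"
proof -
  have gs: "gd m u v = gd m v u" "dd m u v = dd m v u" unfolding gd_def dd_def using E_sym by auto
  show ?thesis
  proof (cases "u < m \<and> v < m")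
    case True then show ?thesis using pl_P assms by blast
  next
    case False
    show ?thesis
    proof (cases "u < m")
      case False then show ?thesis using pl_H assms by simp
    next
      case True
      then have "\<not> v < m" using \<open>\<not> (u < m \<and> v < m)\<close> by simp
      then show ?thesis using pl_H[of m v u] assms gs pl_sym[of m u v] by simp
    qed
  qed
qed



lemma padj_E: "n \<ge> 3 \<Longrightarrow> padj n = E (mm n)"
  by (intro ext) (simp add: padj_iff E_def)

lemma is_path_pth: "n \<ge> 3 \<Longrightarrow> is_path n xs = pth (mm n) xs"
  unfolding is_path_def pth_def by (simp add: padj_E Gn_eq successively_conv_nth)

lemma path_lens_pl: "n \<ge> 3 \<Longrightarrow> path_lens n u v = pl (mm n) u v"
  unfolding path_lens_def pl_def by (simp add: is_path_pth)

lemma gdist_gd: "n \<ge> 3 \<Longrightarrow> u < 2 * mm n \<Longrightarrow> v < 2 * mm n \<Longrightarrow> gdist n u v = gd (mm n) u v"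
  unfolding gdist_def using pl_all[of "mm n" u v] mm_facts[of n] by (simp add: path_lens_pl)

lemma ddist_dd: "n \<ge> 3 \<Longrightarrow> u < 2 * mm n \<Longrightarrow> v < 2 * mm n \<Longrightarrow> ddist n u v = dd (mm n) u v"
  unfolding ddist_def using pl_all[of "mm n" u v] mm_facts[of n] by (simp add: path_lens_pl)




lemma list_eq: "length L = Suc e \<Longrightarrow> (\<And>i. i \<le> e \<Longrightarrow> f i = L ! i) \<Longrightarrow> map f [0..<Suc e] = L"
  by (intro nth_equalityI) (auto simp del: upt_Suc simp: nth_upt less_Suc_eq_le)

lemma max_img: fixes f :: "nat \<Rightarrow> nat"
  assumes "a < M" "f a = c" "\<And>v. v < M \<Longrightarrow> f v \<le> c" shows "Max (f ` {..<M}) = c"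
  using assms by (intro Max_eqI) auto

lemma gd0: "m \<ge> 4 \<Longrightarrow> v < 2 * m \<Longrightarrow> gd m 0 v = (if v = 0 then 0 else 1)"
  by (simp add: gd_def E_def)
lemma gdP: "m \<ge> 4 \<Longrightarrow> 0 < u \<Longrightarrow> u < m \<Longrightarrow> v < 2 * m \<Longrightarrow>
  gd m u v = (if v = u then 0 else if v < m then 1 else 2)"
  by (auto simp: gd_def E_def)
lemma gdH: "m \<ge> 4 \<Longrightarrow> m \<le> u \<Longrightarrow> u < 2 * m \<Longrightarrow> v < 2 * m \<Longrightarrow>
  gd m u v = (if v = u then 0 else if v = 0 then 1 else 2)"
  by (auto simp: gd_def E_def)
lemma dd0: "m \<ge> 4 \<Longrightarrow> v < 2 * m \<Longrightarrow> dd m 0 v = (if v = 0 then 0 else if v < m then m - 1 else 1)"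
  by (simp add: dd_def)
lemma ddP: "m \<ge> 4 \<Longrightarrow> 0 < u \<Longrightarrow> u < m \<Longrightarrow> v < 2 * m \<Longrightarrow>
  dd m u v = (if v = u then 0 else if v < m then m - 1 else m)"
  by (auto simp: dd_def)
lemma ddH: "m \<ge> 4 \<Longrightarrow> m \<le> u \<Longrightarrow> u < 2 * m \<Longrightarrow> v < 2 * m \<Longrightarrow>
  dd m u v = (if v = u then 0 else if v = 0 then 1 else if v < m then m else 2)"
  by (auto simp: dd_def)

lemma cnt_cong: assumes "\<And>v. v < M \<Longrightarrow> f v = g v"
  shows "{v. v < M \<and> f v = k} = {v. v < M \<and> g v = k}"
  using assms by auto

lemma dds0: assumes "m \<ge> 4"
  shows "map (\<lambda>k. card {v. v < 2 * m \<and> gd m 0 v = k}) [0..<Suc (Max (gd m 0 ` {..<2 * m}))]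
    = [1, 2 * m - 1]"
proof -
  have mx: "Max (gd m 0 ` {..<2 * m}) = 1"
    by (rule max_img[of 1]) (use assms gd0 in auto)
  have "{v. v < 2 * m \<and> gd m 0 v = 0} = {0}" using assms gd0 by (auto split: if_splits)
  moreover have "{v. v < 2 * m \<and> gd m 0 v = 1} = {1..<2 * m}" using assms gd0 by (auto split: if_splits)
  ultimately show ?thesis unfolding mx by simp
qed

lemma ddsP: assumes "m \<ge> 4" "0 < u" "u < m"
  shows "map (\<lambda>k. card {v. v < 2 * m \<and> gd m u v = k}) [0..<Suc (Max (gd m u ` {..<2 * m}))]
    = [1, m - 1, m]"
proof -
  have mx: "Max (gd m u ` {..<2 * m}) = 2"
    by (rule max_img[of m]) (use assms gdP in auto)
  have "{v. v < 2 * m \<and> gd m u v = 0} = {u}" using assms gdP by (auto split: if_splits)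
  then have c0: "card {v. v < 2 * m \<and> gd m u v = 0} = 1" by simp
  have "{v. v < 2 * m \<and> gd m u v = 1} = {..<m} - {u}" using assms gdP by (auto split: if_splits)
  then have c1: "card {v. v < 2 * m \<and> gd m u v = 1} = m - 1" using assms by simp
  have "{v. v < 2 * m \<and> gd m u v = 2} = {m..<2 * m}" using assms gdP by (auto split: if_splits)
  then have c2: "card {v. v < 2 * m \<and> gd m u v = 2} = m" by simp
  have l: "[0..<Suc 2] = [0, 1, 2::nat]" by (simp add: upt_rec)
  show ?thesis by (simp only: mx l list.map c0 c1 c2)
qed

lemma ddsH: assumes "m \<ge> 4" "m \<le> u" "u < 2 * m"
  shows "map (\<lambda>k. card {v. v < 2 * m \<and> gd m u v = k}) [0..<Suc (Max (gd m u ` {..<2 * m}))]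
    = [1, 1, 2 * m - 2]"
proof -
  have mx: "Max (gd m u ` {..<2 * m}) = 2"
    by (rule max_img[of 1]) (use assms gdH in auto)
  have "{v. v < 2 * m \<and> gd m u v = 0} = {u}" using assms gdH by (auto split: if_splits)
  then have c0: "card {v. v < 2 * m \<and> gd m u v = 0} = 1" by simp
  have "{v. v < 2 * m \<and> gd m u v = 1} = {0}" using assms gdH by (auto split: if_splits)
  then have c1: "card {v. v < 2 * m \<and> gd m u v = 1} = 1" by simp
  have "{v. v < 2 * m \<and> gd m u v = 2} = {..<2 * m} - {0, u}" using assms gdH by (auto split: if_splits)
  then have c2: "card {v. v < 2 * m \<and> gd m u v = 2} = 2 * m - 2" using assms by simp
  have l: "[0..<Suc 2] = [0, 1, 2::nat]" by (simp add: upt_rec)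
  show ?thesis by (simp only: mx l list.map c0 c1 c2)
qed

lemma nth_L1: assumes "m \<ge> 4" "i < m"
  shows "([1, m] @ replicate (m - 3) 0 @ [m - 1]) ! i =
    (if i = 0 then 1 else if i = 1 then m else if i = m - 1 then m - 1 else (0::nat))"
proof -
  consider "i = 0" | "i = 1" | "1 < i \<and> i < m - 1" | "i = m - 1" using assms by linarith
  then show ?thesis
  proof cases
    case 3
    then have "i = 2 + (i - 2)" "i - 2 < m - 3" by auto
    then show ?thesis using 3 by (simp add: nth_append)
  next
    case 4
    have e: "[1, m] @ replicate (m - 3) 0 @ [m - 1] = ([1, m] @ replicate (m - 3) 0) @ [m - 1]" by simp
    have "length ([1, m] @ replicate (m - 3) 0) = m - 1" using assms by simp
    then have "([1, m] @ replicate (m - 3) 0 @ [m - 1]) ! (m - 1) = m - 1" unfolding e by (metis nth_append_length)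
    then show ?thesis using 4 assms by simp
  qed auto
qed

lemma nth_L2: assumes "m \<ge> 4" "i \<le> m"
  shows "([1] @ replicate (m - 2) 0 @ [m - 1, m]) ! i =
    (if i = 0 then 1 else if i = m - 1 then m - 1 else if i = m then m else (0::nat))"
proof -
  consider "i = 0" | "0 < i \<and> i < m - 1" | "i = m - 1" | "i = m" using assms by linarith
  then show ?thesis
  proof cases
    case 2
    then have "i = 1 + (i - 1)" "i - 1 < m - 2" by auto
    then show ?thesis using 2 by (simp add: nth_append)
  next
    case 3
    then have "i = 1 + (m - 2)" using assms by simp
    then show ?thesis using 3 assms by (simp add: nth_append)
  next
    case 4
    have e: "[1] @ replicate (m - 2) 0 @ [m - 1, m] = ([1] @ replicate (m - 2) 0 @ [m - 1]) @ [m]" by simp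
    have "length ([1] @ replicate (m - 2) 0 @ [m - 1]) = m" using assms by simp
    then have "([1] @ replicate (m - 2) 0 @ [m - 1, m]) ! m = m" unfolding e by (metis nth_append_length)
    then show ?thesis using 4 assms by simp
  qed auto
qed

lemma nth_L3: assumes "m \<ge> 4" "i \<le> m"
  shows "([1, 1, m - 1] @ replicate (m - 3) 0 @ [m - 1]) ! i =
    (if i = 0 then 1 else if i = 1 then 1 else if i = 2 then m - 1 else if i = m then m - 1 else (0::nat))"
proof -
  consider "i = 0" | "i = 1" | "i = 2" | "2 < i \<and> i < m" | "i = m" using assms by linarith
  then show ?thesis
  proof cases
    case 4
    then have "i = 3 + (i - 3)" "i - 3 < m - 3" by auto
    then show ?thesis using 4 by (simp add: nth_append)
  next
    case 5
    have e: "[1, 1, m - 1] @ replicate (m - 3) 0 @ [m - 1] = ([1, 1, m - 1] @ replicate (m - 3) 0) @ [m - 1]" by simp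
    have "length ([1, 1, m - 1] @ replicate (m - 3) 0) = m" using assms by simp
    then have "([1, 1, m - 1] @ replicate (m - 3) 0 @ [m - 1]) ! m = m - 1" unfolding e by (metis nth_append_length)
    then show ?thesis using 5 assms by simp
  qed auto
qed


lemma ddsD0: assumes "m \<ge> 4"
  shows "map (\<lambda>k. card {v. v < 2 * m \<and> dd m 0 v = k}) [0..<Suc (Max (dd m 0 ` {..<2 * m}))]
    = [1, m] @ replicate (m - 3) 0 @ [m - 1]"
proof -
  have mx: "Max (dd m 0 ` {..<2 * m}) = m - 1"
    by (rule max_img[of 1]) (use assms dd0 in auto)
  have ee: "{v. v < 2 * m \<and> dd m 0 v = i} = {v. v < 2 * m \<and> (if v = 0 then 0 else if v < m then m - 1 else 1) = i}" for i
    by (rule cnt_cong) (use assms dd0 in simp)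
  have c: "card {v. v < 2 * m \<and> dd m 0 v = i} =
    (if i = 0 then 1 else if i = 1 then m else if i = m - 1 then m - 1 else (0::nat))" for i
  proof -
    consider "i = 0" | "i = 1" | "i = m - 1" | "i \<noteq> 0 \<and> i \<noteq> 1 \<and> i \<noteq> m - 1" by blast
    then show ?thesis
    proof cases
      case 1
      then have "{v. v < 2 * m \<and> dd m 0 v = i} = {0}" unfolding ee using assms by (auto split: if_splits)
      then show ?thesis using 1 by simp
    next
      case 2
      then have "{v. v < 2 * m \<and> dd m 0 v = i} = {m..<2 * m}" unfolding ee using assms by (auto split: if_splits)
      then show ?thesis using 2 by simp
    next
      case 3
      then have "{v. v < 2 * m \<and> dd m 0 v = i} = {1..<m}" unfolding ee using assms by (auto split: if_splits)
      then show ?thesis using 3 assms by simp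
    next
      case 4
      then have "{v. v < 2 * m \<and> dd m 0 v = i} = {}" unfolding ee using assms by (auto split: if_splits)
      then show ?thesis using 4 by simp
    qed
  qed
  show ?thesis unfolding mx
  proof (rule list_eq)
    show "length ([1, m] @ replicate (m - 3) 0 @ [m - 1]) = Suc (m - 1)" using assms by simp
  next
    fix i assume i: "i \<le> m - 1"
    then have ic: "i < m" using assms by simp
    then show "card {v. v < 2 * m \<and> dd m 0 v = i} = ([1, m] @ replicate (m - 3) 0 @ [m - 1]) ! i"
      using nth_L1[OF assms(1) ic] c[of i] by simp
  qed
qed

lemma ddsDP: assumes "m \<ge> 4" "0 < u" "u < m"
  shows "map (\<lambda>k. card {v. v < 2 * m \<and> dd m u v = k}) [0..<Suc (Max (dd m u ` {..<2 * m}))]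
    = [1] @ replicate (m - 2) 0 @ [m - 1, m]"
proof -
  have mx: "Max (dd m u ` {..<2 * m}) = m"
    by (rule max_img[of m]) (use assms ddP in auto)
  have ee: "{v. v < 2 * m \<and> dd m u v = i} = {v. v < 2 * m \<and> (if v = u then 0 else if v < m then m - 1 else m) = i}" for i
    by (rule cnt_cong) (use assms ddP in simp)
  have c: "card {v. v < 2 * m \<and> dd m u v = i} =
    (if i = 0 then 1 else if i = m - 1 then m - 1 else if i = m then m else (0::nat))" for i
  proof -
    consider "i = 0" | "i = m - 1" | "i = m" | "i \<noteq> 0 \<and> i \<noteq> m \<and> i \<noteq> m - 1" by blast
    then show ?thesis
    proof cases
      case 1
      then have "{v. v < 2 * m \<and> dd m u v = i} = {u}" unfolding ee using assms by (auto split: if_splits)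
      then show ?thesis using 1 by simp
    next
      case 2
      then have "{v. v < 2 * m \<and> dd m u v = i} = {..<m} - {u}" unfolding ee using assms by (auto split: if_splits)
      then show ?thesis using 2 assms by simp
    next
      case 3
      then have "{v. v < 2 * m \<and> dd m u v = i} = {m..<2 * m}" unfolding ee using assms by (auto split: if_splits)
      then show ?thesis using 3 assms by simp
    next
      case 4
      then have "{v. v < 2 * m \<and> dd m u v = i} = {}" unfolding ee using assms by (auto split: if_splits)
      then show ?thesis using 4 by simp
    qed
  qed
  show ?thesis unfolding mx
  proof (rule list_eq)
    show "length ([1] @ replicate (m - 2) 0 @ [m - 1, m]) = Suc (m)" using assms by simp
  next
    fix i assume i: "i \<le> m"
    then have ic: "i \<le> m" using assms by simp
    then show "card {v. v < 2 * m \<and> dd m u v = i} = ([1] @ replicate (m - 2) 0 @ [m - 1, m]) ! i"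
      using nth_L2[OF assms(1) ic] c[of i] by simp
  qed
qed

lemma ddsDH: assumes "m \<ge> 4" "m \<le> u" "u < 2 * m"
  shows "map (\<lambda>k. card {v. v < 2 * m \<and> dd m u v = k}) [0..<Suc (Max (dd m u ` {..<2 * m}))]
    = [1, 1, m - 1] @ replicate (m - 3) 0 @ [m - 1]"
proof -
  have mx: "Max (dd m u ` {..<2 * m}) = m"
    by (rule max_img[of 1]) (use assms ddH in auto)
  have ee: "{v. v < 2 * m \<and> dd m u v = i} = {v. v < 2 * m \<and> (if v = u then 0 else if v = 0 then 1 else if v < m then m else 2) = i}" for i
    by (rule cnt_cong) (use assms ddH in simp)
  have c: "card {v. v < 2 * m \<and> dd m u v = i} =
    (if i = 0 then 1 else if i = 1 then 1 else if i = 2 then m - 1 else if i = m then m - 1 else (0::nat))" for i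
  proof -
    consider "i = 0" | "i = 1" | "i = 2" | "i = m" | "i \<noteq> 0 \<and> i \<noteq> 1 \<and> i \<noteq> 2 \<and> i \<noteq> m" by blast
    then show ?thesis
    proof cases
      case 1
      then have "{v. v < 2 * m \<and> dd m u v = i} = {u}" unfolding ee using assms by (auto split: if_splits)
      then show ?thesis using 1 by simp
    next
      case 2
      then have "{v. v < 2 * m \<and> dd m u v = i} = {0}" unfolding ee using assms by (auto split: if_splits)
      then show ?thesis using 2 assms by simp
    next
      case 3
      then have "{v. v < 2 * m \<and> dd m u v = i} = {m..<2 * m} - {u}" unfolding ee using assms by (auto split: if_splits)
      then show ?thesis using 3 assms by simp
    next
      case 4
      then have "{v. v < 2 * m \<and> dd m u v = i} = {1..<m}" unfolding ee using assms by (auto split: if_splits)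
      then show ?thesis using 4 assms by simp
    next
      case 5
      then have "{v. v < 2 * m \<and> dd m u v = i} = {}" unfolding ee using assms by (auto split: if_splits)
      then show ?thesis using 5 by simp
    qed
  qed
  show ?thesis unfolding mx
  proof (rule list_eq)
    show "length ([1, 1, m - 1] @ replicate (m - 3) 0 @ [m - 1]) = Suc (m)" using assms by simp
  next
    fix i assume i: "i \<le> m"
    then have ic: "i \<le> m" using assms by simp
    then show "card {v. v < 2 * m \<and> dd m u v = i} = ([1, 1, m - 1] @ replicate (m - 3) 0 @ [m - 1]) ! i"
      using nth_L3[OF assms(1) ic] c[of i] by simp
  qed
qed



lemma dds_conv: assumes "n \<ge> 3" "u < 2 * mm n"
  shows "dds n u = map (\<lambda>k. card {v. v < 2 * mm n \<and> gd (mm n) u v = k})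
            [0..<Suc (Max (gd (mm n) u ` {..<2 * mm n}))]"
proof -
  have d: "deg_k n u k = card {v. v < 2 * mm n \<and> gd (mm n) u v = k}" for k
    unfolding deg_k_def Gn_eq[OF assms(1)]
    by (rule arg_cong[where f = card]) (use assms gdist_gd in auto)
  have e: "ecc n u = Max (gd (mm n) u ` {..<2 * mm n})"
    unfolding ecc_def Gn_eq[OF assms(1)]
    by (rule arg_cong[where f = Max], rule image_cong) (use assms gdist_gd in auto)
  show ?thesis unfolding dds_def e d ..
qed

lemma ddsD_conv: assumes "n \<ge> 3" "u < 2 * mm n"
  shows "dds_D n u = map (\<lambda>k. card {v. v < 2 * mm n \<and> dd (mm n) u v = k})
            [0..<Suc (Max (dd (mm n) u ` {..<2 * mm n}))]"
proof -
  have d: "Deg_k n u k = card {v. v < 2 * mm n \<and> dd (mm n) u v = k}" for k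
    unfolding Deg_k_def Gn_eq[OF assms(1)]
    by (rule arg_cong[where f = card]) (use assms ddist_dd in auto)
  have e: "ecc_D n u = Max (dd (mm n) u ` {..<2 * mm n})"
    unfolding ecc_D_def Gn_eq[OF assms(1)]
    by (rule arg_cong[where f = Max], rule image_cong) (use assms ddist_dd in auto)
  show ?thesis unfolding dds_D_def e d ..
qed

theorem mainTheorem11:
  fixes n :: nat
  assumes "n \<ge> 3"
  defines "N \<equiv> 2 ^ (n - 1)"
  shows "dds n 0 = [1, 2 ^ n - 1]
    \<and> (\<forall>u \<in> Pn n - {0}. dds n u = [1, N - 1, N])
    \<and> (\<forall>u \<in> Hn n. dds n u = [1, 1, 2 ^ n - 2])
    \<and> dds_D n 0 = [1, N] @ replicate (N - 3) 0 @ [N - 1]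
    \<and> (\<forall>u \<in> Pn n - {0}. dds_D n u = [1] @ replicate (N - 2) 0 @ [N - 1, N])
    \<and> (\<forall>u \<in> Hn n. dds_D n u = [1, 1, N - 1] @ replicate (N - 3) 0 @ [N - 1])"
proof -
  define m where "m = mm n"
  have N: "N = m" unfolding N_def m_def mm_def ..
  have f: "m \<ge> 4" "2 ^ n = 2 * m" using mm_facts[OF assms(1)] unfolding m_def by auto
  have P: "0 < u \<and> u < m" if "u \<in> Pn n - {0}" for u using that unfolding Pn_def m_def by auto
  have H: "m \<le> u \<and> u < 2 * m" if "u \<in> Hn n" for u using that f unfolding Hn_def m_def by auto
  have m0: "0 < 2 * m" using f by simp
  have c0: "(0::nat) < 2 * mm n" using m0 unfolding m_def .
  have a1: "dds n 0 = [1, 2 * m - 1]" using dds_conv[OF assms(1) c0] dds0[OF f(1)] unfolding m_def by simp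
  have a2: "dds n u = [1, m - 1, m]" if "u \<in> Pn n - {0}" for u
  proof -
    have "u < 2 * mm n" using P[OF that] unfolding m_def by simp
    then show ?thesis using dds_conv[OF assms(1)] ddsP[OF f(1)] P[OF that] unfolding m_def by simp
  qed
  have a3: "dds n u = [1, 1, 2 * m - 2]" if "u \<in> Hn n" for u
  proof -
    have "u < 2 * mm n" using H[OF that] unfolding m_def by simp
    then show ?thesis using dds_conv[OF assms(1)] ddsH[OF f(1)] H[OF that] unfolding m_def by simp
  qed
  have a4: "dds_D n 0 = [1, m] @ replicate (m - 3) 0 @ [m - 1]"
    using ddsD_conv[OF assms(1) c0] ddsD0[OF f(1)] unfolding m_def by simp
  have a5: "dds_D n u = [1] @ replicate (m - 2) 0 @ [m - 1, m]" if "u \<in> Pn n - {0}" for u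
  proof -
    have "u < 2 * mm n" using P[OF that] unfolding m_def by simp
    then show ?thesis using ddsD_conv[OF assms(1)] ddsDP[OF f(1)] P[OF that] unfolding m_def by simp
  qed
  have a6: "dds_D n u = [1, 1, m - 1] @ replicate (m - 3) 0 @ [m - 1]" if "u \<in> Hn n" for u
  proof -
    have "u < 2 * mm n" using H[OF that] unfolding m_def by simp
    then show ?thesis using ddsD_conv[OF assms(1)] ddsDH[OF f(1)] H[OF that] unfolding m_def by simp
  qed
  show ?thesis unfolding N f(2) using a1 a2 a3 a4 a5 a6 by blast
qed

end
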